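(* Let $G=(V,E)$ be an undirected graph with $m$ edges, positive capacities $u_e$, and maximum $s$-$t$ flow value $F^*$. Let $0<\epsilon<1/2$, let $w\in\mathbb{R}^E$ with $w_e>0$ for all $e$, write $|w|_1=\sum_e w_e$, and set $r_e=\frac{1}{u_e^2}\big(w_e+\frac{\epsilon|w|_1}{3m}\big)$. Then: (1) If $0<F\le F^*$ and $\tilde f$ is an $s$-$t$ flow of value $F$ with $\mathcal{E}_r(\tilde f)\le(1+\epsilon/3)\mathcal{E}_r(f)$, where $f$ is the electrical $s$-$t$ flow of value $F$ with respect to $r$, then $\mathcal{E}_r(\tilde f)\le(1+\epsilon)|w|_1$. (2) Every $s$-$t$ flow $g$ with $\mathcal{E}_r(g)\le(1+\epsilon)|w|_1$ satisfies $\sum_e w_e\,\mathrm{cong}_g(e)\le(1+\epsilon)|w|_1$ and $\max_e\mathrm{cong}_g(e)\le 3\sqrt{m/\epsilon}$.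
   Context: Edges are arbitrarily oriented; an $s$-$t$ flow is $f:E\to\mathbb{R}$ conserving flow at all vertices other than $s,t$, with value the net flow out of $s$. $F^*$ is the maximum value of an $s$-$t$ flow with $|f(e)|\le u_e$ for all $e$. $\mathrm{cong}_f(e)=|f(e)|/u_e$. The energy is $\mathcal{E}_r(f)=\sum_e r_e f(e)^2$, and the electrical $s$-$t$ flow of value $F$ is the $s$-$t$ flow of value $F$ minimizing $\mathcal{E}_r$. *)

theory Defs
  imports "HOL-Analysis.Analysis"
begin

text \<open>A (multi)graph with finite edge set E; each edge e is arbitrarily oriented
  from tail e to head e. Functions f :: 'e \<Rightarrow> real assign flow to edges (only values on E matter).\<close>

definition net_out :: "'e set \<Rightarrow> ('e \<Rightarrow> 'v) \<Rightarrow> ('e \<Rightarrow> 'v) \<Rightarrow> ('e \<Rightarrow> real) \<Rightarrow> 'v \<Rightarrow> real" where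
  "net_out E tail head f v = (\<Sum>e\<in>E. if tail e = v then f e else 0) - (\<Sum>e\<in>E. if head e = v then f e else 0)"

definition is_st_flow :: "'v set \<Rightarrow> 'e set \<Rightarrow> ('e \<Rightarrow> 'v) \<Rightarrow> ('e \<Rightarrow> 'v) \<Rightarrow> 'v \<Rightarrow> 'v \<Rightarrow> ('e \<Rightarrow> real) \<Rightarrow> bool" where
  "is_st_flow V E tail head s t f \<longleftrightarrow> (\<forall>v\<in>V - {s, t}. net_out E tail head f v = 0)"

definition flow_value :: "'e set \<Rightarrow> ('e \<Rightarrow> 'v) \<Rightarrow> ('e \<Rightarrow> 'v) \<Rightarrow> 'v \<Rightarrow> ('e \<Rightarrow> real) \<Rightarrow> real" where
  "flow_value E tail head s f = net_out E tail head f s"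

definition max_flow_value :: "'v set \<Rightarrow> 'e set \<Rightarrow> ('e \<Rightarrow> 'v) \<Rightarrow> ('e \<Rightarrow> 'v) \<Rightarrow> 'v \<Rightarrow> 'v \<Rightarrow> ('e \<Rightarrow> real) \<Rightarrow> real" where
  "max_flow_value V E tail head s t u =
     Sup {flow_value E tail head s f | f. is_st_flow V E tail head s t f \<and> (\<forall>e\<in>E. \<bar>f e\<bar> \<le> u e)}"

definition energy :: "'e set \<Rightarrow> ('e \<Rightarrow> real) \<Rightarrow> ('e \<Rightarrow> real) \<Rightarrow> real" where
  "energy E r f = (\<Sum>e\<in>E. r e * (f e)\<^sup>2)"

definition cong :: "('e \<Rightarrow> real) \<Rightarrow> ('e \<Rightarrow> real) \<Rightarrow> 'e \<Rightarrow> real" where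
  "cong u f e = \<bar>f e\<bar> / u e"

definition is_electrical_flow :: "'v set \<Rightarrow> 'e set \<Rightarrow> ('e \<Rightarrow> 'v) \<Rightarrow> ('e \<Rightarrow> 'v) \<Rightarrow> 'v \<Rightarrow> 'v \<Rightarrow> ('e \<Rightarrow> real) \<Rightarrow> real \<Rightarrow> ('e \<Rightarrow> real) \<Rightarrow> bool" where
  "is_electrical_flow V E tail head s t r F f \<longleftrightarrow>
     is_st_flow V E tail head s t f \<and> flow_value E tail head s f = F \<and>
     (\<forall>g. is_st_flow V E tail head s t g \<and> flow_value E tail head s g = F \<longrightarrow> energy E r f \<le> energy E r g)"

end

theory Submission
  imports Defs
begin

lemma net_out_scale: "net_out E tail head (\<lambda>e. c * g e) v = c * net_out E tail head g v"
  unfolding net_out_def by (simp add: sum_distrib_left right_diff_distrib if_distrib cong: if_cong)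

lemma st_flow_scale: "is_st_flow V E tail head s t g \<Longrightarrow> is_st_flow V E tail head s t (\<lambda>e. c * g e)"
  unfolding is_st_flow_def by (simp add: net_out_scale)

lemma value_scale: "flow_value E tail head s (\<lambda>e. c * g e) = c * flow_value E tail head s g"
  unfolding flow_value_def by (simp add: net_out_scale)

lemma energy_scale: "energy E r (\<lambda>e. c * g e) = c^2 * energy E r g"
  unfolding energy_def by (simp add: sum_distrib_left power_mult_distrib algebra_simps)

lemma net_out_bound:
  assumes "finite E" "\<forall>e\<in>E. \<bar>f e\<bar> \<le> u e"
  shows "net_out E tail head f v \<le> 2 * (\<Sum>e\<in>E. u e)"
proof -
  have a: "(\<Sum>e\<in>E. if tail e = v then f e else 0) \<le> (\<Sum>e\<in>E. u e)"
    by (rule sum_mono) (use assms in auto)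
  have b: "- (\<Sum>e\<in>E. if head e = v then f e else 0) \<le> (\<Sum>e\<in>E. u e)"
    unfolding sum_negf[symmetric] by (rule sum_mono) (use assms in auto)
  show ?thesis unfolding net_out_def using a b by linarith
qed

lemma energy_cap:
  assumes finE: "finite E" and ne: "E \<noteq> {}"
    and u_pos: "\<forall>e\<in>E. u e > 0" and eps: "0 < \<epsilon>"
    and w_pos: "\<forall>e\<in>E. w e > 0"
    and r_def: "\<forall>e\<in>E. r e = (w e + \<epsilon> * (\<Sum>e'\<in>E. w e') / (3 * real (card E))) / (u e)\<^sup>2"
    and g: "\<forall>e\<in>E. \<bar>g e\<bar> \<le> u e"
  shows "energy E r g \<le> (1 + \<epsilon>/3) * (\<Sum>e\<in>E. w e)"
proof -
  define W where "W = (\<Sum>e\<in>E. w e)"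
  define d where "d = \<epsilon> * W / (3 * real (card E))"
  have cpos: "real (card E) > 0" using finE ne by (simp add: card_gt_0_iff)
  have W0: "W > 0" unfolding W_def using w_pos ne finE by (simp add: sum_pos)
  have d0: "d \<ge> 0" unfolding d_def using W0 eps cpos by simp
  have "energy E r g \<le> (\<Sum>e\<in>E. w e + d)"
    unfolding energy_def
  proof (rule sum_mono)
    fix e assume e: "e \<in> E"
    have re: "r e = (w e + d) / (u e)^2" using r_def e unfolding d_def W_def by simp
    have "(g e)^2 \<le> (u e)^2" using g e by (metis abs_le_square_iff abs_of_pos u_pos)
    hence "r e * (g e)^2 \<le> (w e + d) / (u e)^2 * (u e)^2"
      unfolding re by (intro mult_left_mono) (use w_pos e d0 in auto)
    also have "\<dots> = w e + d" using u_pos e by (simp add: less_imp_neq[symmetric])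
    finally show "r e * (g e)^2 \<le> w e + d" .
  qed
  also have "\<dots> = W + real (card E) * d" by (simp add: sum.distrib W_def)
  also have "\<dots> = (1 + \<epsilon>/3) * W" unfolding d_def using cpos by (simp add: field_simps)
  finally show ?thesis unfolding W_def .
qed

lemma part2:
  assumes finE: "finite E"
    and u_pos: "\<forall>e\<in>E. u e > 0" and eps: "0 < \<epsilon>" "\<epsilon> < 1/2"
    and w_pos: "\<forall>e\<in>E. w e > 0"
    and r_def: "\<forall>e\<in>E. r e = (w e + \<epsilon> * (\<Sum>e'\<in>E. w e') / (3 * real (card E))) / (u e)\<^sup>2"
    and gE: "energy E r g \<le> (1 + \<epsilon>) * (\<Sum>e\<in>E. w e)"
  shows "(\<Sum>e\<in>E. w e * cong u g e) \<le> (1 + \<epsilon>) * (\<Sum>e\<in>E. w e)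
          \<and> (\<forall>e\<in>E. cong u g e \<le> 3 * sqrt (real (card E) / \<epsilon>))"
proof (cases "E = {}")
  case True then show ?thesis by simp
next
  case ne: False
  define W where "W = (\<Sum>e\<in>E. w e)"
  define d where "d = \<epsilon> * W / (3 * real (card E))"
  have cpos: "real (card E) > 0" using finE ne by (simp add: card_gt_0_iff)
  have W0: "W > 0" unfolding W_def using w_pos ne finE by (simp add: sum_pos)
  have d0: "d > 0" unfolding d_def using W0 eps cpos by simp
  have termeq: "r e * (g e)^2 = (w e + d) * (cong u g e)^2" if e: "e \<in> E" for e
  proof -
    have re: "r e = (w e + d) / (u e)^2" using r_def e unfolding d_def W_def by simp
    show ?thesis unfolding re cong_def using u_pos e by (simp add: power_divide)
  qed
  have En: "energy E r g = (\<Sum>e\<in>E. (w e + d) * (cong u g e)^2)"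
    unfolding energy_def by (rule sum.cong) (auto simp: termeq)
  have cong0: "cong u g e \<ge> 0" if "e \<in> E" for e unfolding cong_def using u_pos that by (simp add: less_imp_le)
  have A: "(\<Sum>e\<in>E. w e * cong u g e) \<le> (1 + \<epsilon>) * W"
  proof -
    have "(\<Sum>e\<in>E. w e * cong u g e) \<le> (\<Sum>e\<in>E. w e / 2 + (w e + d) * (cong u g e)^2 / 2)"
    proof (rule sum_mono)
      fix e assume e: "e \<in> E"
      have "0 \<le> w e * (cong u g e - 1)^2" using w_pos e by (simp add: less_imp_le)
      moreover have "0 \<le> d * (cong u g e)^2" using d0 by simp
      ultimately have "0 \<le> w e * (cong u g e - 1)^2 \<and> 0 \<le> d * (cong u g e)^2" by simp
      then have hh: "0 \<le> w e * (cong u g e - 1)^2 \<and> 0 \<le> d * (cong u g e)^2" .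
      show "w e * cong u g e \<le> w e / 2 + (w e + d) * (cong u g e)^2 / 2"
      proof -
        have h1: "w e * (cong u g e - 1)^2 = w e * (cong u g e)^2 - 2 * (w e * cong u g e) + w e"
          by (simp add: power2_diff algebra_simps)
        have h2: "(w e + d) * (cong u g e)^2 = w e * (cong u g e)^2 + d * (cong u g e)^2"
          by (simp add: algebra_simps)
        show ?thesis using hh h1 h2 by linarith
      qed
    qed
    also have "\<dots> = W/2 + energy E r g / 2"
      unfolding En W_def by (simp add: sum.distrib sum_divide_distrib)
    also have "\<dots> \<le> W/2 + (1+\<epsilon>) * W / 2" using gE unfolding W_def by simp
    also have "\<dots> \<le> (1 + \<epsilon>) * W" using W0 eps
      proof -
        have "0 < \<epsilon> * W" using W0 eps by simp
        moreover have "W/2 + (1+\<epsilon>) * W / 2 = W + (\<epsilon> * W)/2" by (simp add: field_simps)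
        moreover have "(1+\<epsilon>) * W = W + \<epsilon> * W" by (simp add: algebra_simps)
        ultimately show ?thesis using eps by linarith
      qed
    finally show ?thesis .
  qed
  have B: "cong u g e \<le> 3 * sqrt (real (card E) / \<epsilon>)" if e: "e \<in> E" for e
  proof -
    have "d * (cong u g e)^2 \<le> (w e + d) * (cong u g e)^2"
      using w_pos e by (intro mult_right_mono) auto
    also have "\<dots> \<le> energy E r g" unfolding En
      by (rule member_le_sum) (use e w_pos d0 finE in auto)
    finally have "d * (cong u g e)^2 \<le> (1 + \<epsilon>) * W" using gE W_def by simp
    hence "(cong u g e)^2 \<le> (1 + \<epsilon>) * W / d" using d0 by (simp add: field_simps)
    also have "(1 + \<epsilon>) * W / d = 3 * (1 + \<epsilon>) * real (card E) / \<epsilon>"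
      unfolding d_def using W0 eps cpos by (simp add: field_simps)
    also have "\<dots> \<le> 9 * real (card E) / \<epsilon>"
      using eps cpos by (simp add: divide_right_mono)
    also have "\<dots> = (3 * sqrt (real (card E) / \<epsilon>))^2"
      using eps cpos by (simp add: power_mult_distrib)
    finally have sq: "(cong u g e)^2 \<le> (3 * sqrt (real (card E) / \<epsilon>))^2" .
    show ?thesis
      by (rule power2_le_imp_le[OF sq]) (use eps cpos in simp)
  qed
  show ?thesis using A B unfolding W_def by blast
qed

theorem mainTheorem9:
  fixes V :: "'v set" and E :: "'e set" and tail head :: "'e \<Rightarrow> 'v" and s t :: 'v
    and u w r :: "'e \<Rightarrow> real" and \<epsilon> :: real
  assumes finV: "finite V" and finE: "finite E"
    and endpoints: "\<forall>e\<in>E. tail e \<in> V \<and> head e \<in> V"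
    and st: "s \<in> V" "t \<in> V" "s \<noteq> t"
    and u_pos: "\<forall>e\<in>E. u e > 0"
    and eps: "0 < \<epsilon>" "\<epsilon> < 1/2"
    and w_pos: "\<forall>e\<in>E. w e > 0"
    and r_def: "\<forall>e\<in>E. r e = (w e + \<epsilon> * (\<Sum>e'\<in>E. w e') / (3 * real (card E))) / (u e)\<^sup>2"
  shows
    "(\<forall>F f ft. 0 < F \<and> F \<le> max_flow_value V E tail head s t u
        \<and> is_electrical_flow V E tail head s t r F f
        \<and> is_st_flow V E tail head s t ft \<and> flow_value E tail head s ft = F
        \<and> energy E r ft \<le> (1 + \<epsilon>/3) * energy E r f
        \<longrightarrow> energy E r ft \<le> (1 + \<epsilon>) * (\<Sum>e\<in>E. w e))
     \<and> (\<forall>g. is_st_flow V E tail head s t g \<and> energy E r g \<le> (1 + \<epsilon>) * (\<Sum>e\<in>E. w e)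
        \<longrightarrow> (\<Sum>e\<in>E. w e * cong u g e) \<le> (1 + \<epsilon>) * (\<Sum>e\<in>E. w e)
          \<and> (\<forall>e\<in>E. cong u g e \<le> 3 * sqrt (real (card E) / \<epsilon>)))"
proof (intro conjI allI impI)
  fix g assume g: "is_st_flow V E tail head s t g \<and> energy E r g \<le> (1 + \<epsilon>) * (\<Sum>e\<in>E. w e)"
  note P2 = part2[OF finE u_pos eps w_pos r_def conjunct2[OF g]]
  show "(\<Sum>e\<in>E. w e * cong u g e) \<le> (1 + \<epsilon>) * (\<Sum>e\<in>E. w e)" using P2 by blast
  show "\<forall>e\<in>E. cong u g e \<le> 3 * sqrt (real (card E) / \<epsilon>)" using P2 by blast
next
  fix F f ft
  assume H: "0 < F \<and> F \<le> max_flow_value V E tail head s t u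
        \<and> is_electrical_flow V E tail head s t r F f
        \<and> is_st_flow V E tail head s t ft \<and> flow_value E tail head s ft = F
        \<and> energy E r ft \<le> (1 + \<epsilon>/3) * energy E r f"
  define W where "W = (\<Sum>e\<in>E. w e)"
  define S where "S = {flow_value E tail head s f | f. is_st_flow V E tail head s t f \<and> (\<forall>e\<in>E. \<bar>f e\<bar> \<le> u e)}"
  have F0: "0 < F" and FS: "F \<le> Sup S" using H unfolding S_def max_flow_value_def by auto
  have el: "is_electrical_flow V E tail head s t r F f" using H by blast
  have zS: "0 \<in> S" unfolding S_def
    by (rule CollectI, rule exI[of _ "\<lambda>e. 0"]) (auto simp: is_st_flow_def net_out_def flow_value_def less_imp_le u_pos)
  have bdd: "bdd_above S" unfolding S_def bdd_above_def
    by (rule exI[of _ "2 * (\<Sum>e\<in>E. u e)"]) (auto simp: flow_value_def intro: net_out_bound[OF finE])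
  have ne: "E \<noteq> {}"
  proof
    assume "E = {}"
    hence "S = {0}" using zS unfolding S_def by (auto simp: flow_value_def net_out_def)
    thus False using F0 FS by simp
  qed
  have W0: "W > 0" unfolding W_def using w_pos ne finE by (simp add: sum_pos)
  have key: "energy E r f \<le> (1 + \<epsilon>/3) * W"
  proof (rule field_le_mult_one_interval)
    fix z :: real assume z: "0 < z" "z < 1"
    have "sqrt z < 1" using z by simp
    hence "sqrt z * F < F" using F0 by simp
    hence "sqrt z * F < Sup S" using FS by linarith
    then obtain x where xS: "x \<in> S" and xgt: "sqrt z * F < x"
      using less_cSup_iff[of S] zS bdd by blast
    from xS obtain g where g: "is_st_flow V E tail head s t g" "\<forall>e\<in>E. \<bar>g e\<bar> \<le> u e"
      and xv: "x = flow_value E tail head s g" unfolding S_def by blast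
    have x0: "x > 0" using xgt z F0 by (smt (verit) mult_pos_pos real_sqrt_gt_zero)
    define h where "h = (\<lambda>e. (F / x) * g e)"
    have hf: "is_st_flow V E tail head s t h" unfolding h_def by (rule st_flow_scale[OF g(1)])
    have hv: "flow_value E tail head s h = F" unfolding h_def value_scale xv[symmetric] using x0 by simp
    have "energy E r f \<le> energy E r h" using el hf hv unfolding is_electrical_flow_def by blast
    also have "\<dots> = (F/x)^2 * energy E r g" unfolding h_def energy_scale ..
    also have "\<dots> \<le> (F/x)^2 * ((1 + \<epsilon>/3) * W)"
      using energy_cap[OF finE ne u_pos eps(1) w_pos r_def g(2)] unfolding W_def
      by (intro mult_left_mono) auto
    finally have e1: "energy E r f \<le> (F/x)^2 * ((1 + \<epsilon>/3) * W)" .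
    have "z * F^2 < x^2"
    proof -
      have "(sqrt z * F)^2 < x^2" using xgt z F0
        by (intro power_strict_mono) auto
      thus ?thesis using z by (simp add: power_mult_distrib)
    qed
    hence zF: "z * (F/x)^2 \<le> 1" using x0 by (simp add: power_divide field_simps)
    have C0: "0 \<le> (1 + \<epsilon>/3) * W" using W0 eps by simp
    have "z * energy E r f \<le> z * ((F/x)^2 * ((1 + \<epsilon>/3) * W))"
      using e1 z by simp
    also have "\<dots> = (z * (F/x)^2) * ((1 + \<epsilon>/3) * W)" by simp
    also have "\<dots> \<le> 1 * ((1 + \<epsilon>/3) * W)" by (rule mult_right_mono[OF zF C0])
    finally show "z * energy E r f \<le> (1 + \<epsilon>/3) * W" by simp
  qed
  have "energy E r ft \<le> (1 + \<epsilon>/3) * energy E r f" using H by blast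
  also have "\<dots> \<le> (1 + \<epsilon>/3) * ((1 + \<epsilon>/3) * W)" using key eps by (intro mult_left_mono) auto
  also have "\<dots> \<le> (1 + \<epsilon>) * W"
  proof -
    have "(1 + \<epsilon>/3) * (1 + \<epsilon>/3) \<le> 1 + \<epsilon>" using eps
    proof -
      have "\<epsilon> * \<epsilon> \<le> \<epsilon>" using mult_left_mono[of \<epsilon> 1 \<epsilon>] eps by simp
      moreover have "(1 + \<epsilon>/3) * (1 + \<epsilon>/3) = 1 + 2*\<epsilon>/3 + (\<epsilon> * \<epsilon>)/9"
        by (simp add: field_simps)
      ultimately show ?thesis using eps by linarith
    qed
    thus ?thesis using W0 by (metis mult.assoc mult_right_mono less_imp_le)
  qed
  finally show "energy E r ft \<le> (1 + \<epsilon>) * (\<Sum>e\<in>E. w e)" unfolding W_def .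
qed

end
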